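(* Let $N$ be the coarse-grained compartment model with internal chemistry $0\to S$ (rate constant $\kappa_b\ge0$), $S\to0$ (rate constant $\kappa_d\ge0$), compartment parameters $\kappa_I,\kappa_E,\kappa_F,\kappa_C\ge0$, inflow distribution $\mu$ on $\mathbb Z_{\ge0}$ with $\lambda:=\sum_xx\mu(x)<\infty$, and arbitrary fragmentation kernel $\psi$. If $(\kappa_F-\kappa_E)\kappa_b>(\kappa_E+\kappa_d)\kappa_E$, $\kappa_I>0$ and $\kappa_C=0$, then all states are transient for $N$.
   Context: The state space of $N$ is $\mathcal N=\{n:\mathbb Z_{\ge0}\to\mathbb Z_{\ge0}\text{ finitely supported}\}$, where $n_x$ is the number of compartments containing exactly $x$ molecules of $S$; $e_x$ is the indicator of $x$. The kernel $\psi$ satisfies $\psi(x,y)=0$ for $y>x$ and $y\mapsto\psi(x,y)$ is a probability measure for each $x$. $N$ is the continuous-time Markov chain with generator $\mathcal LV(n)=\sum_{x=0}^\infty\Big[\kappa_bn_x\big(V(n-e_x+e_{x+1})-V(n)\big)+\kappa_dn_xx\big(V(n-e_x+e_{x-1})-V(n)\big)+\kappa_I\mu(x)\big(V(n+e_x)-V(n)\big)+\kappa_En_x\big(V(n-e_x)-V(n)\big)+\kappa_Fxn_x\sum_{y=0}^\infty\psi(x,y)\big(V(n-e_x+e_y+e_{x-y})-V(n)\big)+\kappa_C\binom{n_x}2\big(V(n-2e_x+e_{2x})-V(n)\big)+\sum_{y\ne x}\kappa_C\frac{n_xn_y}2\big(V(n-e_x-e_y+e_{x+y})-V(n)\big)\Big]$.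 *)

theory Defs
  imports "HOL-Probability.Probability" "HOL-Library.Multiset"
begin

text \<open>States: a finitely supported function n : nat -> nat is represented as a
  multiset of naturals, with n_x = count n x and e_x = {#x#}.\<close>

type_synonym cstate = "nat multiset"

definition ind :: "bool \<Rightarrow> ennreal" where
  "ind P = (if P then 1 else 0)"

definition rate ::
  "real \<Rightarrow> real \<Rightarrow> real \<Rightarrow> real \<Rightarrow> real \<Rightarrow> real \<Rightarrow> (nat \<Rightarrow> real) \<Rightarrow> (nat \<Rightarrow> nat \<Rightarrow> real)
    \<Rightarrow> cstate \<Rightarrow> cstate \<Rightarrow> ennreal" where
  "rate kb kd kI kE kF kC \<mu> \<psi> n m =
     (\<Sum>x. ennreal (kb * real (count n x)) * ind (m = n - {#x#} + {#Suc x#}))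
   + (\<Sum>x. ennreal (kd * real (count n x) * real x) * ind (m = n - {#x#} + {#x - 1#}))
   + (\<Sum>x. ennreal (kI * \<mu> x) * ind (m = n + {#x#}))
   + (\<Sum>x. ennreal (kE * real (count n x)) * ind (m = n - {#x#}))
   + (\<Sum>x. ennreal (kF * real x * real (count n x)) *
           (\<Sum>y. ennreal (\<psi> x y) * ind (m = n - {#x#} + {#y#} + {#x - y#})))
   + (\<Sum>x. ennreal (kC * real (count n x choose 2)) * ind (m = n - {#x#} - {#x#} + {#2 * x#}))
   + (\<Sum>x. \<Sum>y. if y \<noteq> x then ennreal (kC * real (count n x) * real (count n y) / 2)
                          * ind (m = n - {#x#} - {#y#} + {#x + y#}) else 0)"

definition total_rate ::
  "real \<Rightarrow> real \<Rightarrow> real \<Rightarrow> real \<Rightarrow> real \<Rightarrow> real \<Rightarrow> (nat \<Rightarrow> real) \<Rightarrow> (nat \<Rightarrow> nat \<Rightarrow> real)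
    \<Rightarrow> cstate \<Rightarrow> ennreal" where
  "total_rate kb kd kI kE kF kC \<mu> \<psi> n =
     (\<integral>\<^sup>+ m. rate kb kd kI kE kF kC \<mu> \<psi> n m * ind (m \<noteq> n) \<partial>count_space UNIV)"

text \<open>Transition probabilities of the embedded jump chain (absorbing if total rate is 0).\<close>
definition jump_prob ::
  "real \<Rightarrow> real \<Rightarrow> real \<Rightarrow> real \<Rightarrow> real \<Rightarrow> real \<Rightarrow> (nat \<Rightarrow> real) \<Rightarrow> (nat \<Rightarrow> nat \<Rightarrow> real)
    \<Rightarrow> cstate \<Rightarrow> cstate \<Rightarrow> ennreal" where
  "jump_prob kb kd kI kE kF kC \<mu> \<psi> n m =
     (if total_rate kb kd kI kE kF kC \<mu> \<psi> n = 0 then ind (m = n)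
      else rate kb kd kI kE kF kC \<mu> \<psi> n m * ind (m \<noteq> n) / total_rate kb kd kI kE kF kC \<mu> \<psi> n)"

text \<open>First-passage probabilities of a discrete-time kernel P: probability, starting
  from a, that the first visit to b (at a positive time) happens at step k.\<close>
fun first_passage :: "('s \<Rightarrow> 's \<Rightarrow> ennreal) \<Rightarrow> nat \<Rightarrow> 's \<Rightarrow> 's \<Rightarrow> ennreal" where
  "first_passage P 0 a b = 0"
| "first_passage P (Suc 0) a b = P a b"
| "first_passage P (Suc (Suc k)) a b =
     (\<integral>\<^sup>+ c. P a c * ind (c \<noteq> b) * first_passage P (Suc k) c b \<partial>count_space UNIV)"

definition return_prob :: "('s \<Rightarrow> 's \<Rightarrow> ennreal) \<Rightarrow> 's \<Rightarrow> ennreal" where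
  "return_prob P a = (\<Sum>k. first_passage P k a a)"

definition transient_state :: "('s \<Rightarrow> 's \<Rightarrow> ennreal) \<Rightarrow> 's \<Rightarrow> bool" where
  "transient_state P a \<longleftrightarrow> return_prob P a < 1"

end

theory Submission
  imports Defs
begin

lemma int_point:
  "(\<integral>\<^sup>+ m. ind (m = t) * h m \<partial>count_space UNIV) = h t"
proof -
  have "(\<lambda>m. ind (m = t) * h m) = (\<lambda>m. h t * indicator {t} m)"
    by (auto simp: ind_def fun_eq_iff)
  then show ?thesis by (simp add: nn_integral_cmult_indicator)
qed

lemma int_L1:
  "(\<integral>\<^sup>+ m. (\<Sum>x. c x * ind (m = t x)) * h m \<partial>count_space UNIV) = (\<Sum>x. c x * h (t x))"
proof -
  have "(\<integral>\<^sup>+ m. (\<Sum>x. c x * ind (m = t x)) * h m \<partial>count_space UNIV)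
      = (\<integral>\<^sup>+ m. (\<Sum>x. c x * (ind (m = t x) * h m)) \<partial>count_space UNIV)"
    by (simp only: ennreal_suminf_multc[symmetric] mult.assoc)
  also have "\<dots> = (\<Sum>x. \<integral>\<^sup>+ m. c x * (ind (m = t x) * h m) \<partial>count_space UNIV)"
    by (rule nn_integral_suminf) simp
  also have "\<dots> = (\<Sum>x. c x * h (t x))"
    by (simp add: nn_integral_cmult int_point)
  finally show ?thesis .
qed

lemma int_L2:
  "(\<integral>\<^sup>+ m. (\<Sum>x. c x * (\<Sum>y. d x y * ind (m = t x y))) * h m \<partial>count_space UNIV)
    = (\<Sum>x. c x * (\<Sum>y. d x y * h (t x y)))"
proof -
  have "(\<integral>\<^sup>+ m. (\<Sum>x. c x * (\<Sum>y. d x y * ind (m = t x y))) * h m \<partial>count_space UNIV)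
      = (\<integral>\<^sup>+ m. (\<Sum>x. c x * ((\<Sum>y. d x y * ind (m = t x y)) * h m)) \<partial>count_space UNIV)"
    by (simp only: ennreal_suminf_multc[symmetric] mult.assoc)
  also have "\<dots> = (\<Sum>x. \<integral>\<^sup>+ m. c x * ((\<Sum>y. d x y * ind (m = t x y)) * h m) \<partial>count_space UNIV)"
    by (rule nn_integral_suminf) simp
  also have "\<dots> = (\<Sum>x. c x * (\<Sum>y. d x y * h (t x y)))"
    by (simp add: nn_integral_cmult int_L1)
  finally show ?thesis .
qed

definition trm :: "real \<Rightarrow> real \<Rightarrow> real \<Rightarrow> real \<Rightarrow> real \<Rightarrow> (nat \<Rightarrow> real) \<Rightarrow> (nat \<Rightarrow> nat \<Rightarrow> real)
    \<Rightarrow> cstate \<Rightarrow> (cstate \<Rightarrow> ennreal) \<Rightarrow> nat \<Rightarrow> ennreal" where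
  "trm kb kd kI kE kF \<mu> \<psi> n h x =
      ennreal (kb * real (count n x)) * h (n - {#x#} + {#Suc x#})
      + ennreal (kd * real (count n x) * real x) * h (n - {#x#} + {#x - 1#})
      + ennreal (kI * \<mu> x) * h (n + {#x#})
      + ennreal (kE * real (count n x)) * h (n - {#x#})
      + ennreal (kF * real x * real (count n x)) *
           (\<Sum>y. ennreal (\<psi> x y) * h (n - {#x#} + {#y#} + {#x - y#}))"

lemma int_rate:
  "(\<integral>\<^sup>+ m. rate kb kd kI kE kF 0 \<mu> \<psi> n m * h m \<partial>count_space UNIV) =
   (\<Sum>x. ennreal (kb * real (count n x)) * h (n - {#x#} + {#Suc x#})
      + ennreal (kd * real (count n x) * real x) * h (n - {#x#} + {#x - 1#})
      + ennreal (kI * \<mu> x) * h (n + {#x#})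
      + ennreal (kE * real (count n x)) * h (n - {#x#})
      + ennreal (kF * real x * real (count n x)) *
           (\<Sum>y. ennreal (\<psi> x y) * h (n - {#x#} + {#y#} + {#x - y#})))"
  (is "?L = ?R")
proof -
  have "?L = (\<integral>\<^sup>+ m. 
       (\<Sum>x. ennreal (kb * real (count n x)) * ind (m = n - {#x#} + {#Suc x#})) * h m
     + (\<Sum>x. ennreal (kd * real (count n x) * real x) * ind (m = n - {#x#} + {#x - 1#})) * h m
     + (\<Sum>x. ennreal (kI * \<mu> x) * ind (m = n + {#x#})) * h m
     + (\<Sum>x. ennreal (kE * real (count n x)) * ind (m = n - {#x#})) * h m
     + (\<Sum>x. ennreal (kF * real x * real (count n x)) *
           (\<Sum>y. ennreal (\<psi> x y) * ind (m = n - {#x#} + {#y#} + {#x - y#}))) * h m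
        \<partial>count_space UNIV)"
  proof -
    have z: "\<And>m x. (\<lambda>y. if y \<noteq> x then ennreal (0 * real (count n x) * real (count n y) / 2) * ind (m = n - {#x#} - {#y#} + {#x + y#}) else 0) = (\<lambda>y. 0)"
      by (rule ext) simp
    show ?thesis unfolding rate_def by (simp add: distrib_right z)
  qed
  also have "\<dots> = (\<Sum>x. ennreal (kb * real (count n x)) * h (n - {#x#} + {#Suc x#}))
      + (\<Sum>x. ennreal (kd * real (count n x) * real x) * h (n - {#x#} + {#x - 1#}))
      + (\<Sum>x. ennreal (kI * \<mu> x) * h (n + {#x#}))
      + (\<Sum>x. ennreal (kE * real (count n x)) * h (n - {#x#}))
      + (\<Sum>x. ennreal (kF * real x * real (count n x)) *
           (\<Sum>y. ennreal (\<psi> x y) * h (n - {#x#} + {#y#} + {#x - y#})))"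
    by (simp add: nn_integral_add int_L1 int_L2)
  also have "\<dots> = ?R"
    by (simp add: suminf_add[OF summableI summableI])
  finally show ?thesis .
qed

lemma int_rate':
  "(\<integral>\<^sup>+ m. rate kb kd kI kE kF 0 \<mu> \<psi> n m * h m \<partial>count_space UNIV) =
   (\<Sum>x. trm kb kd kI kE kF \<mu> \<psi> n h x)"
  unfolding int_rate trm_def ..

lemma transient_crit:
  fixes P :: "'s \<Rightarrow> 's \<Rightarrow> ennreal" and g :: "'s \<Rightarrow> ennreal"
  assumes ga: "g a = 1"
    and sup: "\<And>c. (\<integral>\<^sup>+ d. P c d * g d \<partial>count_space UNIV) \<le> g c"
    and lt: "(\<integral>\<^sup>+ d. P a d * g d \<partial>count_space UNIV) < 1"
  shows "transient_state P a"
proof -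
  define F where "F k c = first_passage P k c a" for k c
  have split: "(\<integral>\<^sup>+ d. P c d * h d \<partial>count_space UNIV)
      = P c a * h a + (\<integral>\<^sup>+ d. P c d * ind (d \<noteq> a) * h d \<partial>count_space UNIV)" for c h
  proof -
    have "(\<integral>\<^sup>+ d. P c d * h d \<partial>count_space UNIV)
      = (\<integral>\<^sup>+ d. ind (d = a) * (P c d * h d) + P c d * ind (d \<noteq> a) * h d \<partial>count_space UNIV)"
      by (rule nn_integral_cong) (simp add: ind_def)
    also have "\<dots> = (\<integral>\<^sup>+ d. ind (d = a) * (P c d * h d) \<partial>count_space UNIV)
        + (\<integral>\<^sup>+ d. P c d * ind (d \<noteq> a) * h d \<partial>count_space UNIV)"
      by (rule nn_integral_add) simp_all
    also have "(\<integral>\<^sup>+ d. ind (d = a) * (P c d * h d) \<partial>count_space UNIV) = P c a * h a"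
      by (rule int_point)
    finally show ?thesis .
  qed
  have step: "(\<Sum>k<Suc (Suc K). F k c) = P c a
      + (\<integral>\<^sup>+ d. P c d * ind (d \<noteq> a) * (\<Sum>k<Suc K. F k d) \<partial>count_space UNIV)" for K c
  proof -
    have "(\<Sum>k<Suc (Suc K). F k c) = P c a + (\<Sum>k<K. F (Suc (Suc k)) c)"
      by (simp only: sum.lessThan_Suc_shift) (simp add: F_def)
    also have "(\<Sum>k<K. F (Suc (Suc k)) c)
        = (\<Sum>k<K. \<integral>\<^sup>+ d. P c d * ind (d \<noteq> a) * F (Suc k) d \<partial>count_space UNIV)"
      by (simp add: F_def)
    also have "\<dots> = (\<integral>\<^sup>+ d. (\<Sum>k<K. P c d * ind (d \<noteq> a) * F (Suc k) d) \<partial>count_space UNIV)"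
      by (rule nn_integral_sum[symmetric]) simp
    also have "\<dots> = (\<integral>\<^sup>+ d. P c d * ind (d \<noteq> a) * (\<Sum>k<Suc K. F k d) \<partial>count_space UNIV)"
      by (simp only: sum.lessThan_Suc_shift) (simp add: F_def sum_distrib_left mult.assoc)
    finally show ?thesis .
  qed
  have bound: "(\<Sum>k<Suc K. F k c) \<le> g c" for K c
  proof (induction K arbitrary: c)
    case 0
    then show ?case by (simp add: F_def)
  next
    case (Suc K)
    have "(\<Sum>k<Suc (Suc K). F k c) \<le> P c a
      + (\<integral>\<^sup>+ d. P c d * ind (d \<noteq> a) * g d \<partial>count_space UNIV)"
      unfolding step
      by (intro add_left_mono nn_integral_mono mult_left_mono Suc.IH) simp
    also have "\<dots> = (\<integral>\<^sup>+ d. P c d * g d \<partial>count_space UNIV)"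
      by (simp add: split ga)
    also have "\<dots> \<le> g c" by (rule sup)
    finally show ?case .
  qed
  define \<theta> where "\<theta> = (\<integral>\<^sup>+ d. P a d * g d \<partial>count_space UNIV)"
  have b2: "(\<Sum>k<Suc (Suc K). F k a) \<le> \<theta>" for K
  proof -
    have "(\<Sum>k<Suc (Suc K). F k a) \<le> P a a
      + (\<integral>\<^sup>+ d. P a d * ind (d \<noteq> a) * g d \<partial>count_space UNIV)"
      unfolding step
      by (intro add_left_mono nn_integral_mono mult_left_mono bound) simp
    also have "\<dots> = \<theta>"
      by (simp add: split ga \<theta>_def)
    finally show ?thesis .
  qed
  have "return_prob P a \<le> \<theta>"
    unfolding return_prob_def suminf_eq_SUP
  proof (rule SUP_least)
    fix n
    have "(\<Sum>k<n. first_passage P k a a) \<le> (\<Sum>k<Suc (Suc n). F k a)"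
      unfolding F_def by (rule sum_mono2) auto
    also have "\<dots> \<le> \<theta>" by (rule b2)
    finally show "(\<Sum>k<n. first_passage P k a a) \<le> \<theta>" .
  qed
  then show ?thesis unfolding transient_state_def using lt \<theta>_def by simp
qed


lemma psi_sum:
  assumes psi_nonneg: "\<And>x y. \<psi> x y \<ge> 0"
    and psi_supp: "\<And>x y. y > x \<Longrightarrow> \<psi> x y = 0"
    and psi_prob: "\<And>x. (\<Sum>y\<le>x. \<psi> x y) = 1"
  shows "(\<Sum>y. ennreal (\<psi> x y)) = 1"
proof -
  have "(\<Sum>y. ennreal (\<psi> x y)) = (\<Sum>y\<le>x. ennreal (\<psi> x y))"
    by (rule suminf_finite) (auto simp: psi_supp)
  also have "\<dots> = ennreal (\<Sum>y\<le>x. \<psi> x y)" by (simp add: psi_nonneg)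
  finally show ?thesis by (simp add: psi_prob)
qed

lemma le_term:
  "0 \<le> c \<Longrightarrow> 0 \<le> v \<Longrightarrow> v \<le> v' \<Longrightarrow> ennreal c * (ind P * ennreal v) \<le> ennreal (c * v')"
proof -
  assume a: "0 \<le> c" "0 \<le> v" "v \<le> v'"
  have "ind P * ennreal v \<le> ennreal v'"
    using a by (auto simp: ind_def)
  then have "ennreal c * (ind P * ennreal v) \<le> ennreal c * ennreal v'"
    by (rule mult_left_mono) simp
  also have "\<dots> = ennreal (c * v')" using a by (simp add: ennreal_mult)
  finally show ?thesis .
qed

lemma multle:
  "FR \<le> ennreal v \<Longrightarrow> 0 \<le> c \<Longrightarrow> 0 \<le> v \<Longrightarrow> ennreal c * FR \<le> ennreal (c * v)"
proof -
  assume a: "FR \<le> ennreal v" "0 \<le> c" "0 \<le> v"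
  then have "ennreal c * FR \<le> ennreal c * ennreal v" by (intro mult_left_mono) auto
  also have "\<dots> = ennreal (c * v)" using a by (simp add: ennreal_mult)
  finally show ?thesis .
qed

lemma eq_term:
  "P \<Longrightarrow> 0 \<le> c \<Longrightarrow> ennreal c * ind P = ennreal c"
  by (simp add: ind_def)

lemma drift:
  fixes kb kd kI kE kF :: real and \<mu> :: "nat \<Rightarrow> real" and \<psi> :: "nat \<Rightarrow> nat \<Rightarrow> real"
    and W :: "cstate \<Rightarrow> real" and sf :: "nat \<Rightarrow> real" and n :: cstate and x :: nat
  assumes nonneg: "kb \<ge> 0" "kd \<ge> 0" "kI \<ge> 0" "kE \<ge> 0" "kF \<ge> 0"
    and mu_nonneg: "\<And>x. \<mu> x \<ge> 0"
    and psi_nonneg: "\<And>x y. \<psi> x y \<ge> 0"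
    and psi_supp: "\<And>x y. y > x \<Longrightarrow> \<psi> x y = 0"
    and psi_prob: "\<And>x. (\<Sum>y\<le>x. \<psi> x y) = 1"
    and c0: "0 < c0" "s0 = 1 - c0" "0 < s1" "s1 \<le> s0"
    and sf0: "sf 0 = s0" and sf1: "\<And>x. x \<noteq> 0 \<Longrightarrow> sf x = s1"
    and W_add: "\<And>x m. W (add_mset x m) = sf x * W m"
    and W_pos: "\<And>m. W m > 0"
    and A0: "kb * s1 + kE \<le> (kb + kE) * s0"
    and A1: "\<And>X::real. X \<ge> 1 \<Longrightarrow> kb * s1 + kd * X * s0 + kE + kF * X * s0 * s1 \<le> (kb + kd * X + kE + kF * X) * s1"
  defines "bnd \<equiv> \<lambda>x. kb * real (count n x) + kd * real (count n x) * real x + kI * \<mu> x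
                   + kE * real (count n x) + kF * real x * real (count n x)"
  shows "trm kb kd kI kE kF \<mu> \<psi> n (\<lambda>m. ind (m \<noteq> n)) x = ennreal (bnd x)"
    and "trm kb kd kI kE kF \<mu> \<psi> n (\<lambda>m. ind (m \<noteq> n) * ennreal (W m)) x
          + ennreal (kI * c0 * W n * \<mu> x) \<le> ennreal (bnd x * W n)"
proof -
  have sfb: "0 < sf z" "sf z \<le> s0" for z using c0 sf0 sf1[of z] by (cases "z = 0"; simp)+
  have c01: "c0 < 1" using c0 by linarith
  have c0': "c0 = 1 - s0" using c0 by simp
  have Wnn: "0 \<le> W m" for m using W_pos[of m] by simp
  have P12: "trm kb kd kI kE kF \<mu> \<psi> n (\<lambda>m. ind (m \<noteq> n)) x = ennreal (bnd x) \<and>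
     trm kb kd kI kE kF \<mu> \<psi> n (\<lambda>m. ind (m \<noteq> n) * ennreal (W m)) x
          + ennreal (kI * c0 * W n * \<mu> x) \<le> ennreal (bnd x * W n)"
  proof (cases "x \<in># n")
    case False
    then have cz: "count n x = 0" by (simp add: not_in_iff)
    have P1c: "trm kb kd kI kE kF \<mu> \<psi> n (\<lambda>m. ind (m \<noteq> n)) x = ennreal (bnd x)"
      unfolding trm_def bnd_def using cz by (simp add: ind_def)
    have r: "kI * \<mu> x * (sf x * W n) + kI * c0 * W n * \<mu> x \<le> kI * \<mu> x * W n"
    proof -
      have "sf x + c0 \<le> 1" using sfb[of x] c0 by simp
      then have "kI * \<mu> x * W n * (sf x + c0) \<le> kI * \<mu> x * W n * 1"
        by (intro mult_left_mono) (auto intro!: mult_nonneg_nonneg simp: nonneg mu_nonneg Wnn)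
      then show ?thesis by (simp add: algebra_simps)
    qed
    have "trm kb kd kI kE kF \<mu> \<psi> n (\<lambda>m. ind (m \<noteq> n) * ennreal (W m)) x
        = ennreal (kI * \<mu> x * (sf x * W n))"
      unfolding trm_def using cz
      by (simp add: ind_def W_add ennreal_mult[symmetric] nonneg mu_nonneg sfb Wnn less_imp_le mult_nonneg_nonneg)
    then have P2c: "trm kb kd kI kE kF \<mu> \<psi> n (\<lambda>m. ind (m \<noteq> n) * ennreal (W m)) x
          + ennreal (kI * c0 * W n * \<mu> x) \<le> ennreal (bnd x * W n)"
      using r cz unfolding bnd_def
      by (simp add: nonneg mu_nonneg Wnn sfb less_imp_le c0 mult_nonneg_nonneg del: ennreal_plus
           flip: ennreal_plus)
    show ?thesis using P1c P2c by blast
  next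
    case True
    then obtain n' where n: "n = add_mset x n'" by (metis multi_member_split)
    define w where "w = W n'"
    define cnt where "cnt = real (count n x)"
    have w0: "0 < w" using W_pos w_def by simp
    have cnt0: "0 \<le> cnt" using cnt_def by simp
    have nx: "n - {#x#} = n'" using n by simp
    have i1: "n - {#x#} + {#Suc x#} \<noteq> n" using n by simp
    have i2: "x \<noteq> 0 \<Longrightarrow> n - {#x#} + {#x - 1#} \<noteq> n" using n by simp
    have i3: "n + {#x#} \<noteq> n" by simp
    have i4: "n - {#x#} \<noteq> n" using n by simp
    have i5: "n - {#x#} + {#y#} + {#x - y#} \<noteq> n" for y
    proof
      assume "n - {#x#} + {#y#} + {#x - y#} = n"
      then have "size (n - {#x#} + {#y#} + {#x - y#}) = size n" by simp
      then show False using n by simp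
    qed
    have WT1: "W (n - {#x#} + {#Suc x#}) = s1 * w" using nx by (simp add: W_add sf1 w_def)
    have WT2: "W (n - {#x#} + {#x - 1#}) \<le> s0 * w" using nx sfb[of "x-1"] w0
      by (simp add: W_add w_def)
    have WT3: "W (n + {#x#}) = sf x * sf x * w" using n by (simp add: W_add w_def)
    have WT4: "W (n - {#x#}) = w" using nx w_def by simp
    have Wn: "W n = sf x * w" using n by (simp add: W_add w_def)
    have psi1: "(\<Sum>y. ennreal (\<psi> x y)) = 1" by (rule psi_sum) (auto simp: psi_nonneg psi_supp psi_prob)
    have P1c: "trm kb kd kI kE kF \<mu> \<psi> n (\<lambda>m. ind (m \<noteq> n)) x = ennreal (bnd x)"
    proof -
      have fr: "(\<Sum>y. ennreal (\<psi> x y) * ind (n - {#x#} + {#y#} + {#x - y#} \<noteq> n)) = 1"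
        using i5 psi1 by (simp add: ind_def)
      have d: "ennreal (kd * real (count n x) * real x) * ind (n - {#x#} + {#x - 1#} \<noteq> n)
          = ennreal (kd * real (count n x) * real x)"
        using i2 by (cases "x = 0") (auto simp: ind_def)
      show ?thesis unfolding trm_def bnd_def fr d using i1 i3 i4
        by (simp add: ind_def nonneg mu_nonneg mult_nonneg_nonneg del: ennreal_plus flip: ennreal_plus)
    qed
    have FRle: "ennreal (kF * real x * cnt) *
           (\<Sum>y. ennreal (\<psi> x y) * (ind (n - {#x#} + {#y#} + {#x - y#} \<noteq> n) * ennreal (W (n - {#x#} + {#y#} + {#x - y#}))))
        \<le> ennreal (kF * real x * cnt * (s0 * s1 * w))"
    proof (cases "x = 0")
      case True then show ?thesis by simp
    next
      case xn0: False
      have "(\<Sum>y. ennreal (\<psi> x y) * (ind (n - {#x#} + {#y#} + {#x - y#} \<noteq> n) * ennreal (W (n - {#x#} + {#y#} + {#x - y#}))))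
          \<le> (\<Sum>y. ennreal (\<psi> x y) * ennreal (s0 * s1 * w))"
      proof (rule suminf_le[OF _ summableI summableI])
        fix y
        have "W (n - {#x#} + {#y#} + {#x - y#}) = sf (x - y) * sf y * w"
          using nx by (simp add: W_add w_def)
        also have "\<dots> \<le> s0 * s1 * w"
        proof (cases "y = 0")
          case True then show ?thesis using xn0 sf1[of x] sf0 w0 by simp
        next
          case False
          have "sf (x - y) * sf y \<le> s0 * s1"
            using sf1[OF False] sfb[of "x - y"] c0 by (intro mult_mono) auto
          then show ?thesis using w0 by (intro mult_right_mono) auto
        qed
        finally have "ind (n - {#x#} + {#y#} + {#x - y#} \<noteq> n) * ennreal (W (n - {#x#} + {#y#} + {#x - y#})) \<le> ennreal (s0 * s1 * w)"
          by (auto simp: ind_def intro: ennreal_leI)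
        then show "ennreal (\<psi> x y) * (ind (n - {#x#} + {#y#} + {#x - y#} \<noteq> n) * ennreal (W (n - {#x#} + {#y#} + {#x - y#})))
          \<le> ennreal (\<psi> x y) * ennreal (s0 * s1 * w)"
          by (rule mult_left_mono) simp
      qed
      also have "\<dots> = ennreal (s0 * s1 * w)" using psi1 by simp
      finally show ?thesis
        by (rule multle) (auto intro!: mult_nonneg_nonneg simp: nonneg cnt0 c0 w0 less_imp_le c01)
    qed
    have T: "trm kb kd kI kE kF \<mu> \<psi> n (\<lambda>m. ind (m \<noteq> n) * ennreal (W m)) x
       \<le> ennreal (kb * cnt * (s1 * w)) + ennreal (kd * cnt * real x * (s0 * w))
         + ennreal (kI * \<mu> x * (sf x * sf x * w)) + ennreal (kE * cnt * w)
         + ennreal (kF * real x * cnt * (s0 * s1 * w))"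
      unfolding trm_def cnt_def[symmetric]
      apply (intro add_mono le_term FRle)
      using WT1 WT2 WT3 WT4 Wnn w0 c0 sfb[of x] by (auto simp: nonneg mu_nonneg cnt0 mult_nonneg_nonneg)
    have R: "kb * cnt * (s1 * w) + kd * cnt * real x * (s0 * w)
         + kI * \<mu> x * (sf x * sf x * w) + kE * cnt * w
         + kF * real x * cnt * (s0 * s1 * w) + kI * c0 * W n * \<mu> x \<le> bnd x * W n"
    proof (cases "x = 0")
      case True
      have h1: "cnt * w * (kb * s1 + kE) \<le> cnt * w * ((kb + kE) * s0)"
        using A0 cnt0 w0 by (intro mult_left_mono) auto
      have "bnd x * W n - (kb * cnt * (s1 * w) + kd * cnt * real x * (s0 * w)
         + kI * \<mu> x * (sf x * sf x * w) + kE * cnt * w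
         + kF * real x * cnt * (s0 * s1 * w) + kI * c0 * W n * \<mu> x)
         = cnt * w * ((kb + kE) * s0) - cnt * w * (kb * s1 + kE)"
        unfolding bnd_def Wn cnt_def[symmetric] using True c0(2) by (simp add: sf0 algebra_simps) (simp add: c0' algebra_simps)
      then show ?thesis using h1 by simp
    next
      case False
      have h1: "cnt * w * (kb * s1 + kd * real x * s0 + kE + kF * real x * s0 * s1)
          \<le> cnt * w * ((kb + kd * real x + kE + kF * real x) * s1)"
        using A1[of "real x"] False cnt0 w0 by (intro mult_left_mono) auto
      have h2: "0 \<le> kI * \<mu> x * s1 * w * (s0 - s1)"
        using c0 w0 by (auto intro!: mult_nonneg_nonneg simp: nonneg mu_nonneg)
      have "bnd x * W n - (kb * cnt * (s1 * w) + kd * cnt * real x * (s0 * w)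
         + kI * \<mu> x * (sf x * sf x * w) + kE * cnt * w
         + kF * real x * cnt * (s0 * s1 * w) + kI * c0 * W n * \<mu> x)
         = cnt * w * ((kb + kd * real x + kE + kF * real x) * s1)
           - cnt * w * (kb * s1 + kd * real x * s0 + kE + kF * real x * s0 * s1)
           + kI * \<mu> x * s1 * w * (s0 - s1)"
        unfolding bnd_def Wn cnt_def[symmetric] using False c0(2) by (simp add: sf1[OF False] algebra_simps) (simp add: c0' algebra_simps)
      then show ?thesis using h1 h2 by simp
    qed
    have nn: "0 \<le> kb * cnt * (s1 * w)" "0 \<le> kd * cnt * real x * (s0 * w)"
         "0 \<le> kI * \<mu> x * (sf x * sf x * w)" "0 \<le> kE * cnt * w"
         "0 \<le> kF * real x * cnt * (s0 * s1 * w)" "0 \<le> kI * c0 * W n * \<mu> x"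
      using c0 w0 sfb[of x] Wnn[of n] by (auto intro!: mult_nonneg_nonneg simp: nonneg mu_nonneg cnt0)
    have P2c: "trm kb kd kI kE kF \<mu> \<psi> n (\<lambda>m. ind (m \<noteq> n) * ennreal (W m)) x
          + ennreal (kI * c0 * W n * \<mu> x) \<le> ennreal (bnd x * W n)"
    proof -
      have "trm kb kd kI kE kF \<mu> \<psi> n (\<lambda>m. ind (m \<noteq> n) * ennreal (W m)) x
          + ennreal (kI * c0 * W n * \<mu> x) \<le> ennreal (kb * cnt * (s1 * w)) + ennreal (kd * cnt * real x * (s0 * w))
         + ennreal (kI * \<mu> x * (sf x * sf x * w)) + ennreal (kE * cnt * w)
         + ennreal (kF * real x * cnt * (s0 * s1 * w)) + ennreal (kI * c0 * W n * \<mu> x)"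
        using T by (rule add_right_mono)
      also have "\<dots> = ennreal (kb * cnt * (s1 * w) + kd * cnt * real x * (s0 * w)
         + kI * \<mu> x * (sf x * sf x * w) + kE * cnt * w
         + kF * real x * cnt * (s0 * s1 * w) + kI * c0 * W n * \<mu> x)"
        using nn by (simp del: ennreal_plus add: ennreal_plus[symmetric])
      also have "\<dots> \<le> ennreal (bnd x * W n)" using R by (rule ennreal_leI)
      finally show ?thesis .
    qed
    show ?thesis using P1c P2c by blast
  qed
  show "trm kb kd kI kE kF \<mu> \<psi> n (\<lambda>m. ind (m \<noteq> n)) x = ennreal (bnd x)" using P12 by blast
  show "trm kb kd kI kE kF \<mu> \<psi> n (\<lambda>m. ind (m \<noteq> n) * ennreal (W m)) x
          + ennreal (kI * c0 * W n * \<mu> x) \<le> ennreal (bnd x * W n)" using P12 by blast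
qed


theorem proposition4p7:
  fixes kb kd kI kE kF kC :: real and \<mu> :: "nat \<Rightarrow> real" and \<psi> :: "nat \<Rightarrow> nat \<Rightarrow> real"
  assumes nonneg: "kb \<ge> 0" "kd \<ge> 0" "kI \<ge> 0" "kE \<ge> 0" "kF \<ge> 0" "kC \<ge> 0"
    and mu_nonneg: "\<And>x. \<mu> x \<ge> 0"
    and mu_prob: "\<mu> sums 1"
    and mu_mean: "summable (\<lambda>x. real x * \<mu> x)"
    and psi_nonneg: "\<And>x y. \<psi> x y \<ge> 0"
    and psi_supp: "\<And>x y. y > x \<Longrightarrow> \<psi> x y = 0"
    and psi_prob: "\<And>x. (\<Sum>y\<le>x. \<psi> x y) = 1"
    and cond: "(kF - kE) * kb > (kE + kd) * kE"
    and inflow: "kI > 0"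
    and nocoal: "kC = 0"
  shows "\<forall>n. transient_state (jump_prob kb kd kI kE kF kC \<mu> \<psi>) n"
proof -
  define D where "D = (kF - kE) * kb - kE * (kE + kd)"
  have D0: "D > 0" using cond by (simp add: D_def algebra_simps)
  have kb0: "kb > 0"
  proof (rule ccontr)
    assume "\<not> kb > 0" then have "kb = 0" using nonneg by simp
    moreover have "0 \<le> (kE + kd) * kE" using nonneg by (intro mult_nonneg_nonneg) auto
    ultimately show False using cond by simp
  qed
  have DkF: "D \<le> kF * kb"
    using nonneg kb0 by (simp add: D_def algebra_simps mult_nonneg_nonneg add_nonneg_nonneg)
  define den where "den = kF * kb * (kb + kE) + D + kb + kE"
  have q0: "0 \<le> kF * kb * (kb + kE)" using nonneg by (intro mult_nonneg_nonneg) auto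
  have den0: "den > 0" using D0 kb0 nonneg q0 unfolding den_def by linarith
  define t where "t = D / den"
  have t0: "t > 0" using D0 den0 by (simp add: t_def)
  have "D * (kb + kE) \<le> kF * kb * (kb + kE)"
    using DkF nonneg by (intro mult_right_mono) auto
  then have "D * (kb + kE) < den" using D0 kb0 nonneg unfolding den_def by linarith
  then have tc1: "t * (kb + kE) < 1" using den0 by (simp add: t_def field_simps)
  have "kF * kb * (kb + kE) \<le> den" using D0 kb0 nonneg unfolding den_def by linarith
  then have "kF * kb * (kb + kE) * D \<le> den * D" using D0 by (intro mult_right_mono) auto
  then have tc2: "kF * kb * (t * (kb + kE)) \<le> D" using den0 by (simp add: t_def field_simps)
  define c0 where "c0 = t * kb"
  define s0 where "s0 = 1 - c0"
  define s1 where "s1 = 1 - t * (kb + kE)"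
  have c00: "0 < c0" using t0 kb0 by (simp add: c0_def)
  have s10: "0 < s1" using tc1 by (simp add: s1_def)
  have s1s0: "s1 \<le> s0" using t0 nonneg by (simp add: s1_def s0_def c0_def algebra_simps)
  have A0: "kb * s1 + kE \<le> (kb + kE) * s0"
    using t0 nonneg by (simp add: s1_def s0_def c0_def algebra_simps)
  have A1: "kb * s1 + kd * X * s0 + kE + kF * X * s0 * s1 \<le> (kb + kd * X + kE + kF * X) * s1"
    if X1: "X \<ge> 1" for X :: real
  proof -
    have e: "(kb + kd * X + kE + kF * X) * s1 - (kb * s1 + kd * X * s0 + kE + kF * X * s0 * s1)
        = t * (X * (kF * kb * (1 - t * (kb + kE))) - kd * X * kE - kE * (kb + kE))"
      by (simp add: s1_def s0_def c0_def algebra_simps)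
    have h1: "kE * (kd + kb + kE) \<le> kF * kb * (1 - t * (kb + kE))"
      using tc2 by (simp add: D_def algebra_simps)
    have "X * (kE * (kd + kb + kE)) \<le> X * (kF * kb * (1 - t * (kb + kE)))"
      using h1 X1 by (intro mult_left_mono) auto
    moreover have "kE * (kb + kE) \<le> X * (kE * (kb + kE))"
    proof -
      have "0 \<le> kE * (kb + kE)" using nonneg by (intro mult_nonneg_nonneg) auto
      then have "1 * (kE * (kb + kE)) \<le> X * (kE * (kb + kE))" using X1 by (intro mult_right_mono) auto
      then show ?thesis by simp
    qed
    moreover have "X * (kE * (kd + kb + kE)) = kd * X * kE + X * (kE * (kb + kE))"
      by (simp add: algebra_simps)
    ultimately have "0 \<le> X * (kF * kb * (1 - t * (kb + kE))) - kd * X * kE - kE * (kb + kE)"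
      by linarith
    then have "0 \<le> t * (X * (kF * kb * (1 - t * (kb + kE))) - kd * X * kE - kE * (kb + kE))"
      using t0 by simp
    then show ?thesis using e by simp
  qed
  define sf where "sf x = (if x = 0 then s0 else s1)" for x :: nat
  define W where "W m = (\<Prod>x\<in>#m. sf x)" for m :: cstate
  have W_add: "W (add_mset x m) = sf x * W m" for x m by (simp add: W_def)
  have sfpos: "sf x > 0" for x using s10 s1s0 by (simp add: sf_def)
  have W_pos: "W m > 0" for m
  proof (induction m)
    case empty then show ?case by (simp add: W_def)
  next
    case (add x m) then show ?case by (simp add: W_add sfpos)
  qed
  have key: "(\<integral>\<^sup>+ m. rate kb kd kI kE kF 0 \<mu> \<psi> n m * (ind (m \<noteq> n) * ennreal (W m)) \<partial>count_space UNIV)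
      < total_rate kb kd kI kE kF 0 \<mu> \<psi> n * ennreal (W n)
    \<and> total_rate kb kd kI kE kF 0 \<mu> \<psi> n \<noteq> 0 \<and> total_rate kb kd kI kE kF 0 \<mu> \<psi> n \<noteq> top" for n
  proof -
    define bnd where "bnd = (\<lambda>x. kb * real (count n x) + kd * real (count n x) * real x + kI * \<mu> x
                   + kE * real (count n x) + kF * real x * real (count n x))"
    have sf0: "sf 0 = s0" and sf1: "\<And>x. x \<noteq> 0 \<Longrightarrow> sf x = s1" by (simp_all add: sf_def)
    note dr = drift[OF nonneg(1-5) mu_nonneg psi_nonneg psi_supp psi_prob c00 s0_def s10 s1s0
        sf0 sf1 W_add W_pos A0 A1]
    define X where "X = (\<integral>\<^sup>+ m. rate kb kd kI kE kF 0 \<mu> \<psi> n m * (ind (m \<noteq> n) * ennreal (W m)) \<partial>count_space UNIV)"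
    define T where "T = total_rate kb kd kI kE kF 0 \<mu> \<psi> n"
    have X: "X = (\<Sum>x. trm kb kd kI kE kF \<mu> \<psi> n (\<lambda>m. ind (m \<noteq> n) * ennreal (W m)) x)"
      unfolding X_def by (rule int_rate')
    have T: "T = (\<Sum>x. ennreal (bnd x))"
      unfolding T_def total_rate_def using int_rate'[of kb kd kI kE kF \<mu> \<psi> n "\<lambda>m. ind (m \<noteq> n)"]
      by (simp add: dr(1) bnd_def)
    have pos: "0 < kI * c0 * W n" using inflow c00 W_pos[of n] by simp
    have mu_s: "(\<lambda>x. kI * c0 * W n * \<mu> x) sums (kI * c0 * W n)"
      using sums_mult[OF mu_prob, of "kI * c0 * W n"] by simp
    have E: "ennreal (kI * c0 * W n) = (\<Sum>x. ennreal (kI * c0 * W n * \<mu> x))"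
      by (rule suminf_ennreal_eq[symmetric]) (use pos mu_nonneg mu_s in \<open>auto intro: mult_nonneg_nonneg\<close>)
    have main: "X + ennreal (kI * c0 * W n) \<le> T * ennreal (W n)"
    proof -
      have "X + ennreal (kI * c0 * W n)
          = (\<Sum>x. trm kb kd kI kE kF \<mu> \<psi> n (\<lambda>m. ind (m \<noteq> n) * ennreal (W m)) x
                + ennreal (kI * c0 * W n * \<mu> x))"
        unfolding X E by (rule suminf_add[OF summableI summableI])
      also have "\<dots> \<le> (\<Sum>x. ennreal (bnd x * W n))"
        by (rule suminf_le[OF _ summableI summableI]) (use dr(2) in \<open>simp add: bnd_def\<close>)
      also have "\<dots> = (\<Sum>x. ennreal (bnd x) * ennreal (W n))"
        using W_pos[of n] by (simp add: ennreal_mult'')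
      also have "\<dots> = T * ennreal (W n)" by (simp add: T)
      finally show ?thesis .
    qed
    have bnd_nn: "0 \<le> bnd x" for x
      unfolding bnd_def using nonneg mu_nonneg by (simp add: mult_nonneg_nonneg add_nonneg_nonneg)
    have "summable (\<lambda>x. (kb * real (count n x) + kd * real (count n x) * real x
                   + kE * real (count n x) + kF * real x * real (count n x)) + kI * \<mu> x)"
    proof (rule summable_add)
      show "summable (\<lambda>x. kb * real (count n x) + kd * real (count n x) * real x
                   + kE * real (count n x) + kF * real x * real (count n x))"
        by (rule summable_finite[of "set_mset n"]) (auto simp: not_in_iff)
      show "summable (\<lambda>x. kI * \<mu> x)"
        using mu_prob by (intro summable_mult) (auto simp: sums_iff)
    qed
    then have "summable bnd" unfolding bnd_def by (simp add: algebra_simps)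
    then have Tfin: "T \<noteq> top" unfolding T by (rule ennreal_suminf_neq_top) (rule bnd_nn)
    have Wfin: "ennreal (W n) \<noteq> top" by simp
    have TWfin: "T * ennreal (W n) \<noteq> top" using Tfin Wfin by (simp add: ennreal_mult_eq_top_iff)
    have p0: "0 < ennreal (kI * c0 * W n)" using pos by simp
    have T0: "T \<noteq> 0"
    proof
      assume "T = 0"
      then have "X + ennreal (kI * c0 * W n) \<le> 0" using main by simp
      then show False using p0 by simp
    qed
    have Xlt: "X < T * ennreal (W n)"
    proof (rule ccontr)
      assume "\<not> X < T * ennreal (W n)"
      then have "T * ennreal (W n) \<le> X" by simp
      then have "X + ennreal (kI * c0 * W n) \<le> X + 0" using main by (metis add.right_neutral order_trans)
      then have "X = top \<or> ennreal (kI * c0 * W n) \<le> 0"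
        using ennreal_add_left_cancel_le[of X "ennreal (kI * c0 * W n)" 0] by (simp add: infinity_ennreal_def)
      moreover have "X \<noteq> top" using main TWfin by (auto simp: top_unique)
      ultimately show False using p0 by simp
    qed
    show ?thesis using Xlt T0 Tfin unfolding X_def T_def by blast
  qed
  show ?thesis
    unfolding nocoal
  proof
    fix a
    define g where "g d = ennreal (W d / W a)" for d
    have ga: "g a = 1" using W_pos[of a] by (simp add: g_def)
    have lt: "(\<integral>\<^sup>+ d. jump_prob kb kd kI kE kF 0 \<mu> \<psi> c d * g d \<partial>count_space UNIV) < g c" for c
    proof -
      define T where "T = total_rate kb kd kI kE kF 0 \<mu> \<psi> c"
      define X where "X = (\<integral>\<^sup>+ m. rate kb kd kI kE kF 0 \<mu> \<psi> c m * (ind (m \<noteq> c) * ennreal (W m)) \<partial>count_space UNIV)"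
      have Xlt: "X < T * ennreal (W c)" and T0: "T \<noteq> 0" and Tfin: "T \<noteq> top"
        using key[of c] unfolding X_def T_def by blast+
      have Wa: "0 < W a" by (rule W_pos)
      have eq: "jump_prob kb kd kI kE kF 0 \<mu> \<psi> c d * g d
          = rate kb kd kI kE kF 0 \<mu> \<psi> c d * (ind (d \<noteq> c) * ennreal (W d)) / T / ennreal (W a)" for d
      proof -
        have "g d = ennreal (W d) / ennreal (W a)"
          unfolding g_def using W_pos[of d] Wa by (simp add: divide_ennreal)
        moreover have "jump_prob kb kd kI kE kF 0 \<mu> \<psi> c d = rate kb kd kI kE kF 0 \<mu> \<psi> c d * ind (d \<noteq> c) / T"
          unfolding jump_prob_def T_def[symmetric] using T0 by simp
        ultimately show ?thesis by (simp add: divide_ennreal_def ac_simps)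
      qed
      have "(\<integral>\<^sup>+ d. jump_prob kb kd kI kE kF 0 \<mu> \<psi> c d * g d \<partial>count_space UNIV) = X / T / ennreal (W a)"
        unfolding eq X_def by (simp add: nn_integral_divide)
      also have "\<dots> < g c"
      proof -
        have gc: "g c * ennreal (W a) = ennreal (W c)"
          unfolding g_def using W_pos[of c] Wa by (simp add: ennreal_mult''[symmetric])
        have "X / T < ennreal (W c)"
        proof -
          have "T < top" using Tfin by (simp add: top.not_eq_extremum)
          then show ?thesis using divide_less_ennreal[OF T0 \<open>T < top\<close>] Xlt by (simp add: mult.commute)
        qed
        moreover have "ennreal (W a) \<noteq> 0" "ennreal (W a) < top" using Wa by simp_all
        ultimately show ?thesis using divide_less_ennreal[of "ennreal (W a)" "X / T" "g c"] gc by simp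
      qed
      finally show ?thesis .
    qed
    show "transient_state (jump_prob kb kd kI kE kF 0 \<mu> \<psi>) a"
    proof (rule transient_crit[where g = g])
      show "g a = 1" by (rule ga)
      show "(\<integral>\<^sup>+ d. jump_prob kb kd kI kE kF 0 \<mu> \<psi> c d * g d \<partial>count_space UNIV) \<le> g c" for c
        using lt[of c] by simp
      show "(\<integral>\<^sup>+ d. jump_prob kb kd kI kE kF 0 \<mu> \<psi> a d * g d \<partial>count_space UNIV) < 1"
        using lt[of a] ga by simp
    qed
  qed
qed

end
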